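(* Consider the linear system $x(k+1)=Ax(k)+Bu(k)+w(k)$ with $x(k)\in\mathbb{R}^n$, $u(k)\in\mathbb{R}^m$, $A\in\mathbb{R}^{n\times n}$, $B\in\mathbb{R}^{n\times m}$, where $(w(k))_{k\ge 0}$ is an i.i.d. disturbance sequence (possibly with unbounded support) and $x(0)$ is given. Let $Q\succ 0$, $R\succ 0$, let $P$ be a stabilizing solution of the discrete algebraic Riccati equation and $K$ the corresponding gain, $$K=-(R+B^TPB)^{-1}B^TPA,\qquad P=A^TPA+A^TPBK+Q,$$ so that $A_K:=A+BK$ has all eigenvalues strictly inside the unit circle, and set $S=R+B^TPB$. Let $\mathcal{X}\subseteq\mathbb{R}^n$ and $\mathcal{U}\subseteq\mathbb{R}^m$ be convex sets containing the origin in their interior, and let $\mathcal{R}_x^{\bar p}\subseteq\mathbb{R}^n$, $\mathcal{R}_u^{\bar p}\subseteq\mathbb{R}^m$ be given sets (ellipsoids centred at the origin, as described in the context). Put $\mathcal{Z}:=\mathcal{X}\ominus\mathcal{R}_x^{\bar p}$, $\mathcal{V}:=\mathcal{U}\ominus\mathcal{R}_u^{\bar p}$, and let $\mathcal{Z}_F\subseteq\mathbb{R}^n$ be a terminal set satisfying $A_K\mathcal{Z}_F\subseteq\mathcal{Z}_F\subseteq\mathcal{Z}$ and $K\mathcal{Z}_F\subseteq\mathcal{V}$. Fix a horizon $N\ge 1$. Safety step (linear program): minimize $\sum_{k=0}^{N-1}[\alpha(k)+\beta(k)]$ over $v(0),\dots,v(N-1)\in\mathbb{R}^m$ and $\alpha(k),\beta(k)\in[0,1]$,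 $k=0,\dots,N-1$, subject to $z(0)=x(0)$, $z(k+1)=Az(k)+Bv(k)$, $z(k)\in\mathcal{X}\ominus(1-\alpha(k))\mathcal{R}_x^{\bar p}$, $v(k)\in\mathcal{U}\ominus(1-\beta(k))\mathcal{R}_u^{\bar p}$ for all $k\in\{0,\dots,N-1\}$, and $z(N)\in\mathcal{Z}_F$. Let $\alpha^*(0),\dots,\alpha^*(N-1)$, $\beta^*(0),\dots,\beta^*(N-1)$ be (part of) an optimal solution and extend them by $\alpha^*(k)=\beta^*(k)=0$ for all $k\ge N$. Performance step (solved at each time $k\ge 0$): minimize $\sum_{i=0}^{N-1}\|v_i(k)-Kz_i(k)\|_S^2+l(\xi(k))$ over $v_0(k),\dots,v_{N-1}(k)\in\mathbb{R}^m$ and $\xi(k)\in\{0,1\}$, subject to $z_{i+1}(k)=Az_i(k)+Bv_i(k)$, $z_i(k)\in\mathcal{X}\ominus(1-\alpha^*(k+i))\mathcal{R}_x^{\bar p}$, $v_i(k)\in\mathcal{U}\ominus(1-\beta^*(k+i))\mathcal{R}_u^{\bar p}$ for all $i\in\{0,\dots,N-1\}$, $z_0(k)=(1-\xi(k))x(k)+\xi(k)z_1(k-1)$, and $z_N(k)\in\mathcal{Z}_F$. Here $x(k)$ is the measured state at time $k$, $z_1(k-1)$ is the value $z_1$ from the solution computed at time $k-1$, with the convention $z_1(-1)=x(0)$, $l$ is a given linear or quadratic penalty function of $\xi$, and the input applied to the system is $u(k)=v_0(k)+K(x(k)-z_0(k))$. Then, if the safety-step linear program has a feasible solution, the performance-step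 optimization problem is recursively feasible: it is feasible at time $k=0$, and whenever it is feasible at time $k$ it is feasible at time $k+1$ (for any realization of the disturbance), hence it is feasible at every time $k\ge 0$.
   Context: For sets $A,B\subseteq\mathbb{R}^n$, $A\ominus B:=\{a\mid a+b\in A\ \forall b\in B\}$ (Pontryagin difference), and for a scalar $c$, $cB:=\{cb\mid b\in B\}$. $\|x\|_S^2=x^TSx$. The sets $\mathcal{R}_x^{\bar p}$ and $\mathcal{R}_u^{\bar p}$ are probabilistic reachable sets of the target probability levels $\bar p_x,\bar p_u\in[0,1]$ for the error $e(k+1)=A_Ke(k)+w(k)$ and for $Ke(k)$ respectively; in the paper they are the ellipsoids $\{x\mid x^T\Sigma_\infty^{-1}x\le\tilde p_x\}$ and $\{u \mid u^T(K\Sigma_\infty K^T)^{-1}u\le \tilde p_u\}$, where $\Sigma_\infty$ solves $A_K\Sigma_\infty A_K^T-\Sigma_\infty+\mathrm{var}(w)=0$ and $\tilde p=n/(1-\bar p)$ (or the inverse chi-squared CDF $\chi^2_n(\bar p)$ for Gaussian $w$); the disturbance is assumed to have zero mean and positive definite variance. *)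

theory Defs
  imports "HOL-Analysis.Analysis"
begin

definition pdiff :: "'a::ab_group_add set \<Rightarrow> 'a set \<Rightarrow> 'a set" where
  "pdiff A B = {a. \<forall>b\<in>B. a + b \<in> A}"

definition set_scale :: "real \<Rightarrow> 'a::real_vector set \<Rightarrow> 'a set" where
  "set_scale c B = (\<lambda>b. c *\<^sub>R b) ` B"

definition pos_def :: "real^'n^'n \<Rightarrow> bool" where
  "pos_def M \<longleftrightarrow> transpose M = M \<and> (\<forall>x. x \<noteq> 0 \<longrightarrow> x \<bullet> (M *v x) > 0)"

definition pos_semidef :: "real^'n^'n \<Rightarrow> bool" where
  "pos_semidef M \<longleftrightarrow> transpose M = M \<and> (\<forall>x. x \<bullet> (M *v x) \<ge> 0)"

definition cmat :: "real^'n^'m \<Rightarrow> complex^'n^'m" where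
  "cmat M = (\<chi> i j. complex_of_real (M $ i $ j))"

definition schur_stable :: "real^'n^'n \<Rightarrow> bool" where
  "schur_stable M \<longleftrightarrow>
     (\<forall>(lam::complex) (v::complex^'n). v \<noteq> 0 \<and> cmat M *v v = lam *s v \<longrightarrow> cmod lam < 1)"

fun traj :: "real^'n^'n \<Rightarrow> real^'m^'n \<Rightarrow> real^'n \<Rightarrow> (nat \<Rightarrow> real^'m) \<Rightarrow> nat \<Rightarrow> real^'n" where
  "traj A B z0 v 0 = z0"
| "traj A B z0 v (Suc k) = A *v traj A B z0 v k + B *v v k"

definition safety_feasible ::
  "real^'n^'n \<Rightarrow> real^'m^'n \<Rightarrow> (real^'n) set \<Rightarrow> (real^'m) set \<Rightarrow> (real^'n) set \<Rightarrow> (real^'m) set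
   \<Rightarrow> (real^'n) set \<Rightarrow> nat \<Rightarrow> real^'n \<Rightarrow> (nat \<Rightarrow> real^'m) \<Rightarrow> (nat \<Rightarrow> real) \<Rightarrow> (nat \<Rightarrow> real) \<Rightarrow> bool" where
  "safety_feasible A B X U Rx Ru ZF N x0 v \<alpha> \<beta> \<longleftrightarrow>
     (\<forall>k<N. \<alpha> k \<in> {0..1} \<and> \<beta> k \<in> {0..1}
        \<and> traj A B x0 v k \<in> pdiff X (set_scale (1 - \<alpha> k) Rx)
        \<and> v k \<in> pdiff U (set_scale (1 - \<beta> k) Ru))
     \<and> traj A B x0 v N \<in> ZF"

definition safety_optimal ::
  "real^'n^'n \<Rightarrow> real^'m^'n \<Rightarrow> (real^'n) set \<Rightarrow> (real^'m) set \<Rightarrow> (real^'n) set \<Rightarrow> (real^'m) set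
   \<Rightarrow> (real^'n) set \<Rightarrow> nat \<Rightarrow> real^'n \<Rightarrow> (nat \<Rightarrow> real^'m) \<Rightarrow> (nat \<Rightarrow> real) \<Rightarrow> (nat \<Rightarrow> real) \<Rightarrow> bool" where
  "safety_optimal A B X U Rx Ru ZF N x0 v \<alpha> \<beta> \<longleftrightarrow>
     safety_feasible A B X U Rx Ru ZF N x0 v \<alpha> \<beta> \<and>
     (\<forall>v' \<alpha>' \<beta>'. safety_feasible A B X U Rx Ru ZF N x0 v' \<alpha>' \<beta>' \<longrightarrow>
        (\<Sum>k<N. \<alpha> k + \<beta> k) \<le> (\<Sum>k<N. \<alpha>' k + \<beta>' k))"

definition perf_init :: "real^'n \<Rightarrow> real^'n \<Rightarrow> real \<Rightarrow> real^'n" where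
  "perf_init xk zprev \<xi> = (1 - \<xi>) *\<^sub>R xk + \<xi> *\<^sub>R zprev"

text \<open>Feasibility of the performance-step problem at time k, with measured state xk,
  previous first predicted state zprev = z_1(k-1), decision variables v_0..v_{N-1} and xi.
  (The cost only matters for optimality, not for feasibility.)\<close>
definition perf_feasible ::
  "real^'n^'n \<Rightarrow> real^'m^'n \<Rightarrow> (real^'n) set \<Rightarrow> (real^'m) set \<Rightarrow> (real^'n) set \<Rightarrow> (real^'m) set
   \<Rightarrow> (real^'n) set \<Rightarrow> nat \<Rightarrow> (nat \<Rightarrow> real) \<Rightarrow> (nat \<Rightarrow> real) \<Rightarrow> nat \<Rightarrow> real^'n \<Rightarrow> real^'n
   \<Rightarrow> (nat \<Rightarrow> real^'m) \<Rightarrow> real \<Rightarrow> bool" where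
  "perf_feasible A B X U Rx Ru ZF N \<alpha>s \<beta>s k xk zprev v \<xi> \<longleftrightarrow>
     \<xi> \<in> {0, 1} \<and>
     (\<forall>i<N. traj A B (perf_init xk zprev \<xi>) v i \<in> pdiff X (set_scale (1 - \<alpha>s (k + i)) Rx)
          \<and> v i \<in> pdiff U (set_scale (1 - \<beta>s (k + i)) Ru))
     \<and> traj A B (perf_init xk zprev \<xi>) v N \<in> ZF"

end

theory Submission
  imports Defs
begin

lemma traj_shift: "traj A B z0 v (Suc i) = traj A B (traj A B z0 v 1) (\<lambda>j. v (Suc j)) i"
  by (induction i) auto

lemma traj_cong: "(\<forall>j<i. v j = w j) \<Longrightarrow> traj A B z v i = traj A B z w i"
  by (induction i) auto

lemma scale_one: "set_scale 1 R = R"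
  unfolding set_scale_def by simp

theorem theorem1:
  fixes A :: "real^'n^'n" and B :: "real^'m^'n" and Q P :: "real^'n^'n" and R :: "real^'m^'m"
    and K :: "real^'n^'m" and S :: "real^'m^'m"
    and X ZF Rx :: "(real^'n) set" and U Ru :: "(real^'m) set"
    and \<Sigma> W :: "real^'n^'n" and px pu :: real
    and N :: nat and x0 :: "real^'n"
    and \<alpha>s \<beta>s :: "nat \<Rightarrow> real" and vs :: "nat \<Rightarrow> real^'m"
  assumes Q_pd: "pos_def Q" and R_pd: "pos_def R"
    and K_def: "K = - (matrix_inv (R + transpose B ** P ** B) ** transpose B ** P ** A)"
    and P_sym: "transpose P = P"
    and DARE: "P = transpose A ** P ** A + transpose A ** P ** B ** K + Q"
    and stab: "schur_stable (A + B ** K)"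
    and S_def: "S = R + transpose B ** P ** B"
    and X_cvx: "convex X" and X_int: "0 \<in> interior X"
    and U_cvx: "convex U" and U_int: "0 \<in> interior U"
    and W_pd: "pos_def W"
    and Sigma_lyap: "(A + B ** K) ** \<Sigma> ** transpose (A + B ** K) - \<Sigma> + W = 0"
    and px_pos: "px > 0" and pu_pos: "pu > 0"
    and Rx_def: "Rx = {e. e \<bullet> (matrix_inv \<Sigma> *v e) \<le> px}"
    and Ru_def: "Ru = {u. u \<bullet> (matrix_inv (K ** \<Sigma> ** transpose K) *v u) \<le> pu}"
    and ZF_inv: "(\<lambda>z. (A + B ** K) *v z) ` ZF \<subseteq> ZF"
    and ZF_Z: "ZF \<subseteq> pdiff X Rx"
    and ZF_V: "(\<lambda>z. K *v z) ` ZF \<subseteq> pdiff U Ru"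
    and N_pos: "N \<ge> 1"
    and LP_feasible: "\<exists>v \<alpha> \<beta>. safety_feasible A B X U Rx Ru ZF N x0 v \<alpha> \<beta>"
    and LP_opt: "safety_optimal A B X U Rx Ru ZF N x0 vs \<alpha>s \<beta>s"
    and \<alpha>_ext: "\<forall>k\<ge>N. \<alpha>s k = 0" and \<beta>_ext: "\<forall>k\<ge>N. \<beta>s k = 0"
  shows "(\<exists>v \<xi>. perf_feasible A B X U Rx Ru ZF N \<alpha>s \<beta>s 0 x0 x0 v \<xi>)
    \<and> (\<forall>k xk zprev v \<xi> w.
          perf_feasible A B X U Rx Ru ZF N \<alpha>s \<beta>s k xk zprev v \<xi> \<longrightarrow>
          (let z0 = perf_init xk zprev \<xi>;
               u = v 0 + K *v (xk - z0);
               xk' = A *v xk + B *v u + w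
           in \<exists>v' \<xi>'. perf_feasible A B X U Rx Ru ZF N \<alpha>s \<beta>s (Suc k) xk'
                         (traj A B z0 v 1) v' \<xi>'))"
proof -
  have part1: "\<exists>v \<xi>. perf_feasible A B X U Rx Ru ZF N \<alpha>s \<beta>s 0 x0 x0 v \<xi>"
  proof (intro exI)
    have pi: "perf_init x0 x0 0 = x0" unfolding perf_init_def by simp
    show "perf_feasible A B X U Rx Ru ZF N \<alpha>s \<beta>s 0 x0 x0 vs 0"
      using LP_opt unfolding safety_optimal_def safety_feasible_def perf_feasible_def pi by simp
  qed
  have part2: "perf_feasible A B X U Rx Ru ZF N \<alpha>s \<beta>s k xk zprev v \<xi> \<Longrightarrow>
     \<exists>v' \<xi>'. perf_feasible A B X U Rx Ru ZF N \<alpha>s \<beta>s (Suc k) xk' (traj A B (perf_init xk zprev \<xi>) v 1) v' \<xi>'"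
    for k xk zprev v \<xi> xk'
  proof -
    assume F: "perf_feasible A B X U Rx Ru ZF N \<alpha>s \<beta>s k xk zprev v \<xi>"
    define z0 where "z0 = perf_init xk zprev \<xi>"
    define z1 where "z1 = traj A B z0 v 1"
    define zN where "zN = traj A B z0 v N"
    define v' where "v' = (\<lambda>i. if i < N - 1 then v (Suc i) else K *v zN)"
    have Fi: "\<And>i. i < N \<Longrightarrow> traj A B z0 v i \<in> pdiff X (set_scale (1 - \<alpha>s (k + i)) Rx)
          \<and> v i \<in> pdiff U (set_scale (1 - \<beta>s (k + i)) Ru)"
      and FN: "zN \<in> ZF"
      using F unfolding perf_feasible_def z0_def zN_def by auto
    have pi: "perf_init xk' z1 1 = z1" unfolding perf_init_def by simp
    have tr: "i \<le> N - 1 \<Longrightarrow> traj A B z1 v' i = traj A B z0 v (Suc i)" for i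
    proof -
      assume "i \<le> N - 1"
      hence "traj A B z1 v' i = traj A B z1 (\<lambda>j. v (Suc j)) i"
        by (intro traj_cong) (auto simp: v'_def)
      thus ?thesis unfolding z1_def by (simp only: traj_shift)
    qed
    have zF: "zN \<in> pdiff X Rx" using FN ZF_Z by auto
    have KzN: "K *v zN \<in> pdiff U Ru" using FN ZF_V by auto
    have a0: "\<alpha>s (k + N) = 0" "\<beta>s (k + N) = 0" using \<alpha>_ext \<beta>_ext by auto
    have "perf_feasible A B X U Rx Ru ZF N \<alpha>s \<beta>s (Suc k) xk' z1 v' 1"
      unfolding perf_feasible_def pi
    proof (intro conjI)
      show "(1::real) \<in> {0, 1}" by simp
    next
      show "\<forall>i<N. traj A B z1 v' i \<in> pdiff X (set_scale (1 - \<alpha>s (Suc k + i)) Rx) \<and>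
            v' i \<in> pdiff U (set_scale (1 - \<beta>s (Suc k + i)) Ru)"
      proof (intro allI impI)
      fix i assume i: "i < N"
      show "traj A B z1 v' i \<in> pdiff X (set_scale (1 - \<alpha>s (Suc k + i)) Rx) \<and>
            v' i \<in> pdiff U (set_scale (1 - \<beta>s (Suc k + i)) Ru)"
      proof (cases "i < N - 1")
        case True
        then show ?thesis using tr[of i] Fi[of "Suc i"] by (simp add: v'_def)
      next
        case False
        hence ii: "i = N - 1" "Suc i = N" "Suc k + i = k + N" using i by auto
        show ?thesis using tr[of i] ii zF KzN a0 by (simp add: v'_def scale_one zN_def)
      qed
      qed
    next
      have "traj A B z1 v' N = A *v traj A B z1 v' (N - 1) + B *v v' (N - 1)"
        using N_pos by (metis Suc_diff_1 less_le_trans zero_less_one traj.simps(2))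
      also have "\<dots> = (A + B ** K) *v zN"
        using tr[of "N - 1"] N_pos by (simp add: v'_def zN_def matrix_vector_mul_assoc[symmetric] matrix_vector_mult_add_rdistrib)
      finally show "traj A B z1 v' N \<in> ZF" using ZF_inv FN by auto
    qed
    thus ?thesis unfolding z1_def z0_def by blast
  qed
  show ?thesis using part1 part2 by (simp add: Let_def)
qed

end
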